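(* Let $r\in(1,2)$. Let $Z$ be a random variable with values in $\mathbb{N}$ and $X$ a nonnegative real random variable with $\mathbb{E}[X^r]+\mathbb{E}[Z^r]<+\infty$. Write $L_Z(\xi)=\mathbb{E}[e^{-\xi Z}]$ and $k_X(\xi)=\log\mathbb{E}[e^{-\xi X}]$. Then there is a positive constant $C=C(X)$, depending only on $X$ (and $r$), such that for all $\xi>0$ $$|L_Z(-k_X(\xi))-L_Z(\xi\mathbb{E}[X])|\,\xi^{-r}\le C(X)\big[1+\mathbb{E}[Z^r]\big].$$ *)

theory Defs
  imports "HOL-Probability.Probability"
begin

definition L_Z :: "nat pmf \<Rightarrow> real \<Rightarrow> real" where
  "L_Z p s = (\<integral>n. exp (- s * real n) \<partial>measure_pmf p)"

definition k_X :: "'a measure \<Rightarrow> ('a \<Rightarrow> real) \<Rightarrow> real \<Rightarrow> real" where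
  "k_X M X xi = ln (\<integral>x. exp (- xi * X x) \<partial>M)"

end

theory Submission imports Defs begin
lemma expq: assumes "(t::real) \<ge> 0" shows "exp (-t) \<le> 1 - t + t^2"
proof -
  have "exp (-t) = 1 / exp t" by (simp add: exp_minus field_simps)
  also have "\<dots> \<le> 1 / (1 + t)" using exp_ge_add_one_self[of t] assms
    by (intro divide_left_mono) auto
  also have "\<dots> \<le> 1 - t + t^2" using assms
    by (simp add: field_simps power2_eq_square)
  finally show ?thesis .
qed

lemma L1: assumes "(t::real) \<ge> 0" "1 < r" "r < 2" shows "exp (-t) \<le> 1 - t + t powr r"
proof (cases "t \<le> 1")
  case True
  have "t^2 = t powr 2" using assms by (cases "t = 0") (simp_all add: powr_realpow)
  also have "\<dots> \<le> t powr r" using True assms by (intro powr_mono') auto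
  finally show ?thesis using expq[OF assms(1)] by linarith
next
  case False
  then have "t powr 1 \<le> t powr r" using assms by (intro powr_mono) auto
  then have "t \<le> t powr r" using False by simp
  moreover have "exp (-t) \<le> 1" using assms by simp
  ultimately show ?thesis by linarith
qed

lemma L2: "exp (-(t::real)) \<ge> exp (-s) * (1 - (t - s))"
proof -
  have "exp (-t) = exp (-s) * exp (s - t)" by (simp add: exp_add[symmetric])
  moreover have "exp (s - t) \<ge> 1 - (t - s)" using exp_ge_add_one_self[of "s-t"] by linarith
  ultimately show ?thesis by (metis exp_gt_zero less_imp_le mult_left_mono)
qed

lemma L3: assumes "0 \<le> (a::real)" "a \<le> b" "0 \<le> n"
  shows "\<bar>exp (-a*n) - exp (-b*n)\<bar> \<le> n * (b - a)"
proof -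
  define u where "u = (b-a)*n"
  define A where "A = exp (-a*n)"
  have e: "exp (-b*n) = A * exp (-u)" unfolding A_def u_def by (simp add: exp_add[symmetric] algebra_simps)
  have u: "u \<ge> 0" using assms unfolding u_def by simp
  have h1: "exp (-u) \<le> 1" using u by simp
  have h2: "1 - exp (-u) \<le> u" using exp_ge_add_one_self[of "-u"] by simp
  have h3: "A \<le> 1" "A > 0" using assms unfolding A_def by auto
  have d: "A - A * exp (-u) = A * (1 - exp (-u))" by (simp add: algebra_simps)
  have "0 \<le> A * (1 - exp (-u))" using h1 h3 by simp
  moreover have "A * (1 - exp (-u)) \<le> 1 * (1 - exp (-u))" using h1 h3 by (intro mult_right_mono) auto
  ultimately have "\<bar>A - A * exp (-u)\<bar> \<le> u" using h2 d by simp
  then show ?thesis using e unfolding u_def A_def by (simp add: algebra_simps)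
qed

lemma L4: assumes "0 \<le> (n::real)" "1 < r" shows "n \<le> 1 + n powr r"
proof (cases "n \<le> 1")
  case True then show ?thesis using powr_ge_zero[of n r] by linarith
next
  case False
  then have "n powr 1 \<le> n powr r" using assms by (intro powr_mono) auto
  then show ?thesis using False by simp
qed

theorem lemmaA4:
  fixes M :: "'a measure" and X :: "'a \<Rightarrow> real" and r :: real
  assumes "1 < r" and "r < 2"
    and "prob_space M"
    and "X \<in> borel_measurable M"
    and "AE x in M. 0 \<le> X x"
    and "integrable M (\<lambda>x. X x powr r)"
  shows "\<exists>C>0. \<forall>p :: nat pmf.
           integrable (measure_pmf p) (\<lambda>n. real n powr r) \<longrightarrow>
           (\<forall>xi>0. \<bar>L_Z p (- k_X M X xi) - L_Z p (xi * (\<integral>x. X x \<partial>M))\<bar> * xi powr (- r)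
                   \<le> C * (1 + (\<integral>n. real n powr r \<partial>measure_pmf p)))"
proof -
  interpret P: prob_space M by (rule assms(3))
  have intX: "integrable M X"
  proof (rule Bochner_Integration.integrable_bound)
    show "integrable M (\<lambda>x. 1 + X x powr r)" using assms(6) by simp
    show "X \<in> borel_measurable M" by (rule assms(4))
    show "AE x in M. norm (X x) \<le> norm (1 + X x powr r)"
      using assms(5) proof eventually_elim
      case (elim x) then show ?case using L4[of "X x" r] assms(1) powr_ge_zero[of "X x" r] by simp
    qed
  qed
  define m where "m = (\<integral>x. X x \<partial>M)"
  define Xr where "Xr = (\<integral>x. X x powr r \<partial>M)"
  have Xr0: "Xr \<ge> 0" unfolding Xr_def by (intro integral_nonneg_AE) auto
  show ?thesis
  proof (intro exI[of _ "Xr + 1"] conjI allI impI)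
    show "Xr + 1 > 0" using Xr0 by simp
    fix p :: "nat pmf" and xi :: real
    assume intp: "integrable (measure_pmf p) (\<lambda>n. real n powr r)" and xi: "xi > 0"
    define I where "I = (\<integral>n. real n powr r \<partial>measure_pmf p)"
    have I0: "I \<ge> 0" unfolding I_def by (intro integral_nonneg_AE) auto
    define E where "E = (\<integral>x. exp (- xi * X x) \<partial>M)"
    have meas: "(\<lambda>x. exp (- xi * X x)) \<in> borel_measurable M" using assms(4) by measurable
    have bnd: "AE x in M. exp (- xi * X x) \<le> 1"
      using assms(5) by eventually_elim (use xi in simp)
    have intE: "integrable M (\<lambda>x. exp (- xi * X x))"
      by (rule P.integrable_const_bound[where B=1]) (use bnd meas in auto)
    have E1: "E \<le> 1"
    proof -
      have "E \<le> (\<integral>x. 1 \<partial>M)" unfolding E_def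
        by (rule integral_mono_AE) (use intE bnd in auto)
      then show ?thesis by (simp add: P.prob_space)
    qed
    have Elow: "E \<ge> exp (- (xi * m))"
    proof -
      have "(\<integral>x. exp (- (xi*m)) * (1 + xi*m) - exp (- (xi*m)) * xi * X x \<partial>M) \<le> E" unfolding E_def
      proof (rule integral_mono)
        show "integrable M (\<lambda>x. exp (- (xi*m)) * (1 + xi*m) - exp (- (xi*m)) * xi * X x)"
          using intX by simp
        show "integrable M (\<lambda>x. exp (- xi * X x))" by (rule intE)
        fix x assume "x \<in> space M"
        show "exp (- (xi*m)) * (1 + xi*m) - exp (- (xi*m)) * xi * X x \<le> exp (- xi * X x)"
          using L2[where t="xi * X x" and s="xi * m"] by (simp add: algebra_simps)
      qed
      moreover have "(\<integral>x. exp (- (xi*m)) * (1 + xi*m) - exp (- (xi*m)) * xi * X x \<partial>M) = exp (- (xi*m))"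
        using intX by (simp add: P.prob_space m_def algebra_simps)
      ultimately show ?thesis by simp
    qed
    have E0: "E > 0" using Elow by (smt (verit) exp_gt_zero)
    have Eup: "E \<le> 1 - xi * m + xi powr r * Xr"
    proof -
      have "E \<le> (\<integral>x. 1 - xi * X x + xi powr r * X x powr r \<partial>M)" unfolding E_def
      proof (rule integral_mono_AE)
        show "integrable M (\<lambda>x. 1 - xi * X x + xi powr r * X x powr r)"
          using intX assms(6) by simp
        show "integrable M (\<lambda>x. exp (- xi * X x))" by (rule intE)
        show "AE x in M. exp (- xi * X x) \<le> 1 - xi * X x + xi powr r * X x powr r"
          using assms(5) proof eventually_elim
          case (elim x)
          then show ?case using L1[of "xi * X x" r] assms(1,2) xi by (simp add: powr_mult)
        qed
      qed
      also have "\<dots> = 1 - xi * m + xi powr r * Xr"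
        using intX assms(6) by (simp add: P.prob_space m_def Xr_def)
      finally show ?thesis .
    qed
    define a where "a = - ln E"
    define b where "b = xi * m"
    have ka: "- k_X M X xi = a" unfolding a_def k_X_def E_def by simp
    have a0: "0 \<le> a" unfolding a_def using E0 E1 by simp
    have ab: "a \<le> b" unfolding a_def b_def using Elow E0
      by (metis ln_exp ln_le_cancel_iff exp_gt_zero minus_le_iff)
    have bma: "b - a \<le> xi powr r * Xr"
      unfolding a_def b_def using ln_le_minus_one[OF E0] Eup by linarith
    have intn: "integrable (measure_pmf p) (\<lambda>n. real n)"
    proof (rule Bochner_Integration.integrable_bound)
      show "integrable (measure_pmf p) (\<lambda>n. 1 + real n powr r)" using intp by simp
      show "(\<lambda>n. real n) \<in> borel_measurable (measure_pmf p)" by simp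
      show "AE n in measure_pmf p. norm (real n) \<le> norm (1 + real n powr r)"
        using L4[of "real _" r] assms(1) powr_ge_zero by (auto intro!: AE_I2)
    qed
    have intexp: "integrable (measure_pmf p) (\<lambda>n. exp (- c * real n))" if "c \<ge> 0" for c
      by (rule measure_pmf.integrable_const_bound[where B=1]) (use that in auto)
    have "\<bar>L_Z p a - L_Z p b\<bar> = \<bar>\<integral>n. exp (- a * real n) - exp (- b * real n) \<partial>measure_pmf p\<bar>"
      unfolding L_Z_def using intexp[OF a0] intexp[of b] a0 ab by simp
    also have "\<dots> \<le> (\<integral>n. \<bar>exp (- a * real n) - exp (- b * real n)\<bar> \<partial>measure_pmf p)"
      by (rule integral_abs_bound)
    also have "\<dots> \<le> (\<integral>n. (1 + real n powr r) * (b - a) \<partial>measure_pmf p)"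
    proof (rule integral_mono)
      show "integrable (measure_pmf p) (\<lambda>n. \<bar>exp (- a * real n) - exp (- b * real n)\<bar>)"
        using intexp[OF a0] intexp[of b] a0 ab by simp
      show "integrable (measure_pmf p) (\<lambda>n. (1 + real n powr r) * (b - a))" using intp by simp
      fix n :: nat
      have "\<bar>exp (- a * real n) - exp (- b * real n)\<bar> \<le> real n * (b - a)" using L3[OF a0 ab] by simp
      also have "\<dots> \<le> (1 + real n powr r) * (b - a)"
        using L4[of "real n" r] assms(1) ab by (intro mult_right_mono) auto
      finally show "\<bar>exp (- a * real n) - exp (- b * real n)\<bar> \<le> (1 + real n powr r) * (b - a)" .
    qed
    also have "\<dots> = (1 + I) * (b - a)" using intp by (simp add: I_def)
    finally have main: "\<bar>L_Z p a - L_Z p b\<bar> \<le> (1 + I) * (b - a)" .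
    have "\<bar>L_Z p a - L_Z p b\<bar> * xi powr (- r) \<le> (1 + I) * (b - a) * xi powr (- r)"
      using main by (intro mult_right_mono) auto
    also have "\<dots> \<le> (1 + I) * (xi powr r * Xr) * xi powr (- r)"
      using bma I0 by (intro mult_right_mono mult_left_mono) auto
    also have "\<dots> = (1 + I) * Xr" using xi by (simp add: powr_minus field_simps)
    also have "\<dots> \<le> (Xr + 1) * (1 + I)" using I0 by (simp add: algebra_simps)
    finally show "\<bar>L_Z p (- k_X M X xi) - L_Z p (xi * (\<integral>x. X x \<partial>M))\<bar> * xi powr (- r)
                   \<le> (Xr + 1) * (1 + (\<integral>n. real n powr r \<partial>measure_pmf p))"
      unfolding ka I_def[symmetric] m_def[symmetric] b_def[symmetric] .
  qed
qed

end
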